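(* Let $\beta=(\pi_\ell)_{\ell=1}^L$ be a chainable architecture, let $\mathbf{M}$ be a complex matrix of size $a_1b_1d_1\times a_Lc_Ld_L$, and let $s,q\in\{1,\dots,L-1\}$. If $\mathbf{N}$ is a projection of $\mathbf{M}$ onto $\mathcal{B}^{\beta_q}$, i.e. $\mathbf{N}\in\mathcal{B}^{\beta_q}$ and $\|\mathbf{M}-\mathbf{N}\|_F=\min_{\mathbf{B}\in\mathcal{B}^{\beta_q}}\|\mathbf{M}-\mathbf{B}\|_F$, then $$E^{\beta_s}(\mathbf{M})\ge E^{\beta_s}(\mathbf{N}).$$
   Context: A pattern is a tuple $\pi=(a,b,c,d)$ of positive integers; $\mathbf{S}_\pi:=\mathbf{I}_a\otimes\mathbf{1}_{b\times c}\otimes\mathbf{I}_d\in\{0,1\}^{abd\times acd}$. A $\pi$-factor is a complex $abd\times acd$ matrix with support in that of $\mathbf{S}_\pi$; $\Sigma^\pi$ is the set of $\pi$-factors. Patterns $\pi=(a,b,c,d),\pi'=(a',b',c',d')$ are chainable if $ac/a'=b'd'/d$ is an integer, $a\mid a'$, $d'\mid d$; then $\pi*\pi':=(a,bd/d',a'c'/a,d')$. An architecture $\beta=(\pi_\ell)_{\ell=1}^L$, $\pi_\ell=(a_\ell,b_\ell,c_\ell,d_\ell)$, is a sequence of patterns with $a_\ell c_\ell d_\ell=a_{\ell+1}b_{\ell+1}d_{\ell+1}$, chainable if every consecutive pair is chainable; $\pi_p*\cdots*\pi_q$ is the iterated product. For $s\in\{1,\dots,L-1\}$, $\beta_s:=(\pi_1*\cdots*\pi_s,\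 \pi_{s+1}*\cdots*\pi_L)$, $\mathcal{B}^{\beta_s}:=\{\mathbf{X}\mathbf{Y}:\mathbf{X}\in\Sigma^{\pi_1*\cdots*\pi_s},\mathbf{Y}\in\Sigma^{\pi_{s+1}*\cdots*\pi_L}\}$, and $E^{\beta_s}(\mathbf{A}):=\min_{\mathbf{B}\in\mathcal{B}^{\beta_s}}\|\mathbf{A}-\mathbf{B}\|_F$. *)

theory Defs
  imports "HOL-Analysis.Analysis"
begin

text \<open>Matrices of arbitrary size are represented as functions nat => nat => complex
  together with explicit dimensions (0-based indices).\<close>

type_synonym cmat = "nat \<Rightarrow> nat \<Rightarrow> complex"
type_synonym pattern = "nat \<times> nat \<times> nat \<times> nat"

definition frob :: "nat \<Rightarrow> nat \<Rightarrow> cmat \<Rightarrow> real" where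
  "frob m n A = sqrt (\<Sum>i<m. \<Sum>j<n. (cmod (A i j))\<^sup>2)"

definition mmult :: "nat \<Rightarrow> cmat \<Rightarrow> cmat \<Rightarrow> cmat" where
  "mmult k X Y = (\<lambda>i l. \<Sum>j<k. X i j * Y j l)"

definition prows :: "pattern \<Rightarrow> nat" where
  "prows p = (case p of (a,b,c,d) \<Rightarrow> a*b*d)"

definition pcols :: "pattern \<Rightarrow> nat" where
  "pcols p = (case p of (a,b,c,d) \<Rightarrow> a*c*d)"

text \<open>Support of S_pi = I_a (x) 1_{b x c} (x) I_d: row i = i1*(b*d)+i2*d+i3,
  column j = j1*(c*d)+j2*d+j3; entry is 1 iff i1 = j1 and i3 = j3.\<close>
definition supp_S :: "pattern \<Rightarrow> nat \<Rightarrow> nat \<Rightarrow> bool" where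
  "supp_S p i j = (case p of (a,b,c,d) \<Rightarrow>
     i < a*b*d \<and> j < a*c*d \<and> i div (b*d) = j div (c*d) \<and> i mod d = j mod d)"

text \<open>pi-factors: matrices of size abd x acd supported in supp(S_pi)
  (entries outside the matrix are zero by convention).\<close>
definition factors :: "pattern \<Rightarrow> cmat set" where
  "factors p = {X. \<forall>i j. X i j \<noteq> 0 \<longrightarrow> supp_S p i j}"

definition pattern_pos :: "pattern \<Rightarrow> bool" where
  "pattern_pos p = (case p of (a,b,c,d) \<Rightarrow> 0 < a \<and> 0 < b \<and> 0 < c \<and> 0 < d)"

definition chainable :: "pattern \<Rightarrow> pattern \<Rightarrow> bool" where
  "chainable p p' = (case p of (a,b,c,d) \<Rightarrow> case p' of (a',b',c',d') \<Rightarrow>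
     a' dvd a*c \<and> (a*c) div a' * d = b'*d' \<and> a dvd a' \<and> d' dvd d)"

definition pstar :: "pattern \<Rightarrow> pattern \<Rightarrow> pattern" where
  "pstar p p' = (case p of (a,b,c,d) \<Rightarrow> case p' of (a',b',c',d') \<Rightarrow>
     (a, b*d div d', a'*c' div a, d'))"

definition iter_star :: "pattern list \<Rightarrow> pattern" where
  "iter_star ps = foldl pstar (hd ps) (tl ps)"

definition architecture :: "pattern list \<Rightarrow> bool" where
  "architecture ps = (ps \<noteq> [] \<and> (\<forall>p\<in>set ps. pattern_pos p) \<and>
     (\<forall>l. Suc l < length ps \<longrightarrow> pcols (ps ! l) = prows (ps ! Suc l)))"

definition chainable_arch :: "pattern list \<Rightarrow> bool" where
  "chainable_arch ps = (architecture ps \<and>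
     (\<forall>l. Suc l < length ps \<longrightarrow> chainable (ps ! l) (ps ! Suc l)))"

text \<open>beta_s = (pi_1*...*pi_s, pi_{s+1}*...*pi_L), s 1-based.\<close>
definition split_left :: "pattern list \<Rightarrow> nat \<Rightarrow> pattern" where
  "split_left ps s = iter_star (take s ps)"

definition split_right :: "pattern list \<Rightarrow> nat \<Rightarrow> pattern" where
  "split_right ps s = iter_star (drop s ps)"

definition Bset :: "pattern list \<Rightarrow> nat \<Rightarrow> cmat set" where
  "Bset ps s = {mmult (pcols (split_left ps s)) X Y | X Y.
      X \<in> factors (split_left ps s) \<and> Y \<in> factors (split_right ps s)}"

definition arows :: "pattern list \<Rightarrow> nat" where
  "arows ps = prows (hd ps)"

definition acols :: "pattern list \<Rightarrow> nat" where
  "acols ps = pcols (last ps)"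

definition Err :: "pattern list \<Rightarrow> nat \<Rightarrow> cmat \<Rightarrow> real" where
  "Err ps s A = Inf ((\<lambda>B. frob (arows ps) (acols ps) (\<lambda>i j. A i j - B i j)) ` Bset ps s)"

end

theory Submission
  imports Defs
begin


definition fac :: "(nat \<Rightarrow> nat \<Rightarrow> bool) \<Rightarrow> cmat set" where
  "fac R = {X. \<forall>i j. X i j \<noteq> 0 \<longrightarrow> R i j}"

definition ip :: "nat \<Rightarrow> nat \<Rightarrow> cmat \<Rightarrow> cmat \<Rightarrow> complex" where
  "ip m n A B = (\<Sum>i<m. \<Sum>j<n. A i j * cnj (B i j))"

definition nsq :: "nat \<Rightarrow> nat \<Rightarrow> cmat \<Rightarrow> real" where
  "nsq m n A = (\<Sum>i<m. \<Sum>j<n. (cmod (A i j))\<^sup>2)"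

lemma frob_nsq: "frob m n A = sqrt (nsq m n A)"
  by (simp add: frob_def nsq_def)

lemma nsq_nonneg: "nsq m n A \<ge> 0"
  unfolding nsq_def by (intro sum_nonneg) auto

lemma ip_self: "ip m n A A = complex_of_real (nsq m n A)"
  unfolding ip_def nsq_def by (simp add: complex_norm_square[symmetric] of_real_sum)

lemma ip_add_left: "ip m n (\<lambda>i j. A i j + B i j) C = ip m n A C + ip m n B C"
  unfolding ip_def by (simp add: distrib_right sum.distrib)
lemma ip_diff_left: "ip m n (\<lambda>i j. A i j - B i j) C = ip m n A C - ip m n B C"
  unfolding ip_def by (simp add: left_diff_distrib sum_subtractf)
lemma ip_add_right: "ip m n C (\<lambda>i j. A i j + B i j) = ip m n C A + ip m n C B"
  unfolding ip_def by (simp add: distrib_left sum.distrib)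
lemma ip_diff_right: "ip m n C (\<lambda>i j. A i j - B i j) = ip m n C A - ip m n C B"
  unfolding ip_def by (simp add: right_diff_distrib sum_subtractf)
lemma ip_scale_left: "ip m n (\<lambda>i j. c * A i j) B = c * ip m n A B"
  unfolding ip_def by (simp add: sum_distrib_left mult.assoc)
lemma ip_scale_right: "ip m n A (\<lambda>i j. c * B i j) = cnj c * ip m n A B"
  unfolding ip_def by (simp add: sum_distrib_left mult_ac)
lemma ip_cnj: "cnj (ip m n A B) = ip m n B A"
  unfolding ip_def by (simp add: mult.commute)

lemma nsq_add: "nsq m n (\<lambda>i j. A i j + B i j) = nsq m n A + nsq m n B + 2 * Re (ip m n A B)"
proof -
  have "\<And>a b. (cmod (a + b))\<^sup>2 = (cmod a)\<^sup>2 + (cmod b)\<^sup>2 + 2 * Re (a * cnj b)"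
    by (simp only: cmod_power2) (simp add: algebra_simps power2_eq_square)
  then show ?thesis
    unfolding nsq_def ip_def by (simp add: sum.distrib sum_distrib_left)
qed

lemma nsq_zero_ip:
  assumes "nsq m n w = 0" shows "ip m n y w = 0"
proof -
  have "\<forall>i\<in>{..<m}. (\<Sum>j<n. (cmod (w i j))\<^sup>2) = 0"
    using assms unfolding nsq_def by (subst sum_nonneg_eq_0_iff[symmetric]) (auto intro: sum_nonneg)
  then have "\<And>i j. i < m \<Longrightarrow> j < n \<Longrightarrow> w i j = 0"
    by (auto simp: sum_nonneg_eq_0_iff)
  then show ?thesis unfolding ip_def by simp
qed

lemma re_zero:
  assumes "\<And>t::real. nsq m n D \<le> nsq m n (\<lambda>i j. D i j - complex_of_real t * V i j)"
  shows "Re (ip m n D V) = 0"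
proof -
  have eq: "nsq m n (\<lambda>i j. D i j - complex_of_real t * V i j) =
     nsq m n D + t\<^sup>2 * nsq m n V - 2 * t * Re (ip m n D V)" for t
  proof -
    have "nsq m n (\<lambda>i j. D i j - complex_of_real t * V i j) = nsq m n (\<lambda>i j. D i j + (- complex_of_real t) * V i j)"
      by simp
    also have "\<dots> = nsq m n D + nsq m n (\<lambda>i j. (- complex_of_real t) * V i j) + 2 * Re (ip m n D (\<lambda>i j. (- complex_of_real t) * V i j))"
      by (rule nsq_add)
    also have "nsq m n (\<lambda>i j. (- complex_of_real t) * V i j) = t\<^sup>2 * nsq m n V"
      unfolding nsq_def by (simp add: norm_mult power_mult_distrib sum_distrib_left)
    also have "ip m n D (\<lambda>i j. (- complex_of_real t) * V i j) = - complex_of_real t * ip m n D V"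
      by (subst ip_scale_right) simp
    finally show ?thesis by simp
  qed
  define c where "c = Re (ip m n D V)"
  define v where "v = nsq m n V"
  have v0: "v \<ge> 0" unfolding v_def by (rule nsq_nonneg)
  have H: "0 \<le> t\<^sup>2 * v - 2 * t * c" for t
    using assms[of t] unfolding eq c_def v_def by simp
  show ?thesis
  proof (rule ccontr)
    assume "Re (ip m n D V) \<noteq> 0"
    then have c0: "c \<noteq> 0" by (simp add: c_def)
    show False
    proof (cases "v = 0")
      case True
      from H[of c] have "c * c \<le> 0" using True by (simp add: power2_eq_square)
      then show False using c0 by (smt (verit) mult_pos_pos mult_neg_neg)
    next
      case False
      with v0 have vp: "v > 0" by simp
      from H[of "c / v"] have "0 \<le> c\<^sup>2 / v - 2 * c\<^sup>2 / v"
        using vp by (simp add: power2_eq_square field_simps)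
      then have "c\<^sup>2 / v \<le> 0" by simp
      moreover have "c\<^sup>2 / v > 0" using c0 vp by simp
      ultimately show False by simp
    qed
  qed
qed


lemma mm_add: "mmult k X (\<lambda>a b. Z a b + W a b) = (\<lambda>i j. mmult k X Z i j + mmult k X W i j)"
  by (simp add: mmult_def distrib_left sum.distrib)
lemma mm_diff: "mmult k X (\<lambda>a b. Z a b - W a b) = (\<lambda>i j. mmult k X Z i j - mmult k X W i j)"
  by (simp add: mmult_def right_diff_distrib sum_subtractf)
lemma mm_scale: "mmult k X (\<lambda>a b. c * Z a b) = (\<lambda>i j. c * mmult k X Z i j)"
  by (simp add: mmult_def sum_distrib_left mult.left_commute)
lemma mm_zero: "mmult k X (\<lambda>a b. 0) = (\<lambda>i j. 0)"
  by (simp add: mmult_def)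
lemma mm_diff_left: "mmult k (\<lambda>a b. Z a b - W a b) Y = (\<lambda>i j. mmult k Z Y i j - mmult k W Y i j)"
  by (simp add: mmult_def left_diff_distrib sum_subtractf)
lemma mm_assoc: "mmult k2 (mmult k1 X Z) Y = mmult k1 X (mmult k2 Z Y)"
  unfolding mmult_def
  by (rule ext, rule ext) (simp add: sum_distrib_left sum_distrib_right mult.assoc sum.swap[of _ "{..<k2}"])

definition facS :: "(nat \<times> nat) set \<Rightarrow> cmat set" where
  "facS S = {X. \<forall>a b. X a b \<noteq> 0 \<longrightarrow> (a,b) \<in> S}"

lemma gs:
  assumes "finite S"
  shows "\<forall>x. \<exists>Z\<in>facS S. \<forall>W\<in>facS S.
           ip m k2 (\<lambda>i j. x i j - mmult k1 XN Z i j) (mmult k1 XN W) = 0"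
  using assms
proof (induction S rule: finite_induct)
  case empty
  show ?case
  proof
    fix x
    show "\<exists>Z\<in>facS {}. \<forall>W\<in>facS {}. ip m k2 (\<lambda>i j. x i j - mmult k1 XN Z i j) (mmult k1 XN W) = 0"
    proof (intro bexI[of _ "\<lambda>a b. 0"] ballI)
      fix W assume "W \<in> facS {}"
      then have "W = (\<lambda>a b. 0)" by (auto simp: facS_def)
      then show "ip m k2 (\<lambda>i j. x i j - mmult k1 XN (\<lambda>a b. 0) i j) (mmult k1 XN W) = 0"
        by (simp add: mm_zero ip_def)
    qed (simp add: facS_def)
  qed
next
  case (insert e0 S)
  let ?A = "mmult k1 XN"
  obtain a0 b0 where e0: "e0 = (a0, b0)" by (cases e0)
  define E0 :: cmat where "E0 = (\<lambda>a b. if (a,b) = e0 then 1 else 0)"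
  have decomp: "W = (\<lambda>a b. (if (a,b) = e0 then 0 else W a b) + W a0 b0 * E0 a b)" for W
    by (rule ext, rule ext) (auto simp: E0_def e0)
  have Wr: "(\<lambda>a b. if (a,b) = e0 then 0 else W a b) \<in> facS S" if "W \<in> facS (insert e0 S)" for W
    using that by (auto simp: facS_def)
  have AW: "?A W = (\<lambda>i j. ?A (\<lambda>a b. if (a,b) = e0 then 0 else W a b) i j + W a0 b0 * ?A E0 i j)" for W
    by (subst decomp[of W]) (simp add: mm_add mm_scale)
  show ?case
  proof
    fix x
    obtain Z1 where Z1: "Z1 \<in> facS S" and o1: "\<forall>W\<in>facS S. ip m k2 (\<lambda>i j. x i j - ?A Z1 i j) (?A W) = 0"
      using insert.IH by blast
    obtain Z2 where Z2: "Z2 \<in> facS S" and o2: "\<forall>W\<in>facS S. ip m k2 (\<lambda>i j. ?A E0 i j - ?A Z2 i j) (?A W) = 0"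
      using insert.IH by blast
    define r1 where "r1 = (\<lambda>i j. x i j - ?A Z1 i j)"
    define w where "w = (\<lambda>i j. ?A E0 i j - ?A Z2 i j)"
    have AE0: "?A E0 = (\<lambda>i j. w i j + ?A Z2 i j)" by (simp add: w_def)
    show "\<exists>Z\<in>facS (insert e0 S). \<forall>W\<in>facS (insert e0 S).
           ip m k2 (\<lambda>i j. x i j - ?A Z i j) (?A W) = 0"
    proof (cases "nsq m k2 w = 0")
      case True
      have "ip m k2 r1 (?A E0) = 0"
        unfolding AE0 ip_add_right using nsq_zero_ip[OF True] o1 Z2 by (simp add: r1_def)
      then have key: "ip m k2 r1 (?A W) = 0" if "W \<in> facS (insert e0 S)" for W
        by (subst AW) (simp add: ip_add_right ip_scale_right o1[unfolded r1_def[symmetric]] Wr[OF that])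
      show ?thesis
        using Z1 key by (auto simp: facS_def r1_def intro!: bexI[of _ Z1])
    next
      case False
      define t where "t = ip m k2 r1 w / ip m k2 w w"
      have ww: "ip m k2 w w \<noteq> 0" using False by (simp add: ip_self)
      define Z where "Z = (\<lambda>a b. Z1 a b + t * (E0 a b - Z2 a b))"
      have AZ: "?A Z = (\<lambda>i j. ?A Z1 i j + t * w i j)"
        by (simp add: Z_def mm_add mm_scale mm_diff w_def)
      have res: "(\<lambda>i j. x i j - ?A Z i j) = (\<lambda>i j. r1 i j - t * w i j)"
        by (simp add: AZ r1_def algebra_simps)
      have ZS: "Z \<in> facS (insert e0 S)"
        unfolding facS_def mem_Collect_eq
      proof (intro allI impI)
        fix a b assume nz: "Z a b \<noteq> 0"
        show "(a, b) \<in> insert e0 S"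
        proof (rule ccontr)
          assume "(a, b) \<notin> insert e0 S"
          then have "E0 a b = 0" "Z1 a b = 0" "Z2 a b = 0" using Z1 Z2 by (auto simp: E0_def facS_def)
          then show False using nz by (simp add: Z_def)
        qed
      qed
      have oS: "ip m k2 (\<lambda>i j. r1 i j - t * w i j) (?A W) = 0" if "W \<in> facS S" for W
        using o1 o2 that by (simp add: ip_diff_left ip_scale_left r1_def w_def)
      have ow: "ip m k2 (\<lambda>i j. r1 i j - t * w i j) w = 0"
        using ww by (simp only: ip_diff_left ip_scale_left) (simp add: t_def)
      have oE: "ip m k2 (\<lambda>i j. r1 i j - t * w i j) (?A E0) = 0"
        unfolding AE0 ip_add_right using ow oS[OF Z2] by simp
      show ?thesis
      proof (intro bexI[OF _ ZS] ballI)
        fix W assume W: "W \<in> facS (insert e0 S)"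
        show "ip m k2 (\<lambda>i j. x i j - ?A Z i j) (?A W) = 0"
          unfolding res by (subst AW) (simp add: ip_add_right ip_scale_right oE oS[OF Wr[OF W]])
      qed
    qed
  qed
qed


lemma fac_add: "A \<in> fac R \<Longrightarrow> B \<in> fac R \<Longrightarrow> (\<lambda>i j. A i j + B i j) \<in> fac R"
  by (auto simp: fac_def) (metis add_0)
lemma fac_diff: "A \<in> fac R \<Longrightarrow> B \<in> fac R \<Longrightarrow> (\<lambda>i j. A i j - B i j) \<in> fac R"
  by (auto simp: fac_def) (metis diff_zero)
lemma fac_scale: "A \<in> fac R \<Longrightarrow> (\<lambda>i j. c * A i j) \<in> fac R"
  by (auto simp: fac_def)

lemma mm_fac:
  assumes "X \<in> fac R1" "Y \<in> fac R2" "\<And>i p j. R1 i p \<Longrightarrow> R2 p j \<Longrightarrow> R3 i j"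
  shows "mmult k X Y \<in> fac R3"
  unfolding fac_def mem_Collect_eq
proof (intro allI impI)
  fix i j assume "mmult k X Y i j \<noteq> 0"
  then obtain p where "X i p * Y p j \<noteq> 0" unfolding mmult_def by (meson sum.neutral)
  then have "X i p \<noteq> 0" "Y p j \<noteq> 0" by auto
  then show "R3 i j" using assms unfolding fac_def by blast
qed

lemma swap_in: "(\<Sum>a\<in>A. \<Sum>b\<in>B. \<Sum>c\<in>C. f a b c) = (\<Sum>a\<in>A. \<Sum>c\<in>C. \<Sum>b\<in>B. f a b c)"
  by (rule sum.cong[OF refl], rule sum.swap)

lemma ip_mm_expand:
  "ip m n (mmult k2 D Y) (mmult k1 XN W) =
   (\<Sum>p<k1. \<Sum>q<k2. (\<Sum>i<m. D i q * cnj (XN i p)) * (\<Sum>j<n. Y q j * cnj (W p j)))"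
proof -
  let ?f = "\<lambda>i j p q. D i q * Y q j * (cnj (XN i p) * cnj (W p j))"
  have "ip m n (mmult k2 D Y) (mmult k1 XN W) =
     (\<Sum>i<m. \<Sum>j<n. \<Sum>p<k1. \<Sum>q<k2. ?f i j p q)"
    unfolding ip_def mmult_def by (simp add: sum_distrib_left sum_distrib_right)
  also have "\<dots> = (\<Sum>i<m. \<Sum>p<k1. \<Sum>j<n. \<Sum>q<k2. ?f i j p q)"
    by (rule swap_in)
  also have "\<dots> = (\<Sum>p<k1. \<Sum>i<m. \<Sum>j<n. \<Sum>q<k2. ?f i j p q)"
    by (rule sum.swap)
  also have "\<dots> = (\<Sum>p<k1. \<Sum>i<m. \<Sum>q<k2. \<Sum>j<n. ?f i j p q)"
    by (rule sum.cong[OF refl], rule swap_in)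
  also have "\<dots> = (\<Sum>p<k1. \<Sum>q<k2. \<Sum>i<m. \<Sum>j<n. ?f i j p q)"
    by (rule swap_in)
  also have "\<dots> = (\<Sum>p<k1. \<Sum>q<k2. (\<Sum>i<m. D i q * cnj (XN i p)) * (\<Sum>j<n. Y q j * cnj (W p j)))"
    by (simp add: sum_product mult_ac)
  finally show ?thesis .
qed

lemma ip_mm_expand2:
  "ip m k2 D (mmult k1 XN Wt) = (\<Sum>p<k1. \<Sum>q<k2. (\<Sum>i<m. D i q * cnj (XN i p)) * cnj (Wt p q))"
proof -
  let ?f = "\<lambda>i q p. D i q * cnj (XN i p) * cnj (Wt p q)"
  have "ip m k2 D (mmult k1 XN Wt) = (\<Sum>i<m. \<Sum>q<k2. \<Sum>p<k1. ?f i q p)"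
    unfolding ip_def mmult_def by (simp add: sum_distrib_left mult_ac)
  also have "\<dots> = (\<Sum>i<m. \<Sum>p<k1. \<Sum>q<k2. ?f i q p)"
    by (rule swap_in)
  also have "\<dots> = (\<Sum>p<k1. \<Sum>i<m. \<Sum>q<k2. ?f i q p)"
    by (rule sum.swap)
  also have "\<dots> = (\<Sum>p<k1. \<Sum>q<k2. \<Sum>i<m. ?f i q p)"
    by (rule swap_in)
  also have "\<dots> = (\<Sum>p<k1. \<Sum>q<k2. (\<Sum>i<m. D i q * cnj (XN i p)) * cnj (Wt p q))"
    by (simp add: sum_distrib_right)
  finally show ?thesis .
qed


lemma sum_nz_ex: "(\<Sum>x\<in>A. f x) \<noteq> 0 \<Longrightarrow> \<exists>x\<in>A. f x \<noteq> 0"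
  by (meson sum.neutral)

lemma core_left:
  fixes XN YN X Y M :: cmat
  assumes H1: "\<And>i p q. Lq i p \<Longrightarrow> Mid p q \<Longrightarrow> Ls i q"
    and H2: "\<And>p q j. Mid p q \<Longrightarrow> Rs q j \<Longrightarrow> Rq p j"
    and H3: "\<And>i p q j. Lq i p \<Longrightarrow> Ls i q \<Longrightarrow> Rs q j \<Longrightarrow> Rq p j \<Longrightarrow> Mid p q"
    and XN: "XN \<in> fac Lq" and YN: "YN \<in> fac Rq" and X: "X \<in> fac Ls" and Y: "Y \<in> fac Rs"
    and min: "\<And>W. W \<in> fac Rq \<Longrightarrow> nsq m n (\<lambda>i j. M i j - mmult k1 XN YN i j)
                 \<le> nsq m n (\<lambda>i j. M i j - mmult k1 XN W i j)"
  shows "\<exists>X2\<in>fac Ls. nsq m n (\<lambda>i j. mmult k1 XN YN i j - mmult k2 X2 Y i j)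
            \<le> nsq m n (\<lambda>i j. M i j - mmult k2 X Y i j)"
proof -
  define N where "N = mmult k1 XN YN"
  have orth1: "Re (ip m n (\<lambda>i j. M i j - N i j) (mmult k1 XN W)) = 0" if W: "W \<in> fac Rq" for W
  proof (rule re_zero)
    fix t :: real
    have "(\<lambda>i j. YN i j + complex_of_real t * W i j) \<in> fac Rq"
      using YN W by (intro fac_add fac_scale)
    from min[OF this]
    show "nsq m n (\<lambda>i j. M i j - N i j) \<le> nsq m n (\<lambda>i j. M i j - N i j - complex_of_real t * mmult k1 XN W i j)"
      by (simp add: N_def mm_add mm_scale algebra_simps)
  qed
  define S where "S = {(p,q). p < k1 \<and> q < k2 \<and> Mid p q}"
  have finS: "finite S"
    by (rule finite_subset[of _ "{..<k1} \<times> {..<k2}"]) (auto simp: S_def)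
  obtain Z where Z: "Z \<in> facS S" and ne: "\<And>W. W \<in> facS S \<Longrightarrow>
      ip m k2 (\<lambda>i j. X i j - mmult k1 XN Z i j) (mmult k1 XN W) = 0"
    using gs[OF finS] by blast
  have ZM: "Z \<in> fac Mid" using Z by (auto simp: facS_def fac_def S_def)
  define X2 where "X2 = mmult k1 XN Z"
  have X2: "X2 \<in> fac Ls" unfolding X2_def by (rule mm_fac[OF XN ZM H1])
  define D where "D = (\<lambda>i j. X i j - X2 i j)"
  have DL: "D \<in> fac Ls" unfolding D_def by (rule fac_diff[OF X X2])
  define B where "B = mmult k2 X Y"
  define B2 where "B2 = mmult k2 X2 Y"
  have B2eq: "B2 = mmult k1 XN (mmult k2 Z Y)" by (simp add: B2_def X2_def mm_assoc)
  have ZY: "mmult k2 Z Y \<in> fac Rq" by (rule mm_fac[OF ZM Y H2])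
  have orth2: "ip m n (\<lambda>i j. B i j - B2 i j) (mmult k1 XN W) = 0" if W: "W \<in> fac Rq" for W
  proof -
    have BD: "(\<lambda>i j. B i j - B2 i j) = mmult k2 D Y"
      by (simp add: B_def B2_def D_def mm_diff_left)
    define Wt where "Wt = (\<lambda>p q. if (p,q) \<in> S then cnj (\<Sum>j<n. Y q j * cnj (W p j)) else 0)"
    have WtS: "Wt \<in> facS S" by (auto simp: facS_def Wt_def)
    have "ip m n (\<lambda>i j. B i j - B2 i j) (mmult k1 XN W) =
      (\<Sum>p<k1. \<Sum>q<k2. (\<Sum>i<m. D i q * cnj (XN i p)) * (\<Sum>j<n. Y q j * cnj (W p j)))"
      unfolding BD by (rule ip_mm_expand)
    also have "\<dots> = (\<Sum>p<k1. \<Sum>q<k2. (\<Sum>i<m. D i q * cnj (XN i p)) * cnj (Wt p q))"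
    proof (intro sum.cong refl)
      fix p q assume p: "p \<in> {..<k1}" and q: "q \<in> {..<k2}"
      show "(\<Sum>i<m. D i q * cnj (XN i p)) * (\<Sum>j<n. Y q j * cnj (W p j)) =
            (\<Sum>i<m. D i q * cnj (XN i p)) * cnj (Wt p q)"
      proof (cases "Mid p q")
        case True
        then show ?thesis using p q by (simp add: Wt_def S_def)
      next
        case False
        have "(\<Sum>i<m. D i q * cnj (XN i p)) * (\<Sum>j<n. Y q j * cnj (W p j)) = 0"
        proof (rule ccontr)
          assume "(\<Sum>i<m. D i q * cnj (XN i p)) * (\<Sum>j<n. Y q j * cnj (W p j)) \<noteq> 0"
          then have "(\<Sum>i<m. D i q * cnj (XN i p)) \<noteq> 0" "(\<Sum>j<n. Y q j * cnj (W p j)) \<noteq> 0" by auto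
          then obtain i j where "D i q * cnj (XN i p) \<noteq> 0" "Y q j * cnj (W p j) \<noteq> 0"
            by (meson sum_nz_ex)
          then have "Ls i q" "Lq i p" "Rs q j" "Rq p j"
            using DL XN Y W by (auto simp: fac_def)
          then show False using H3 False by blast
        qed
        moreover have "Wt p q = 0" using False by (simp add: Wt_def S_def)
        ultimately show ?thesis by simp
      qed
    qed
    also have "\<dots> = ip m k2 D (mmult k1 XN Wt)"
      by (rule ip_mm_expand2[symmetric])
    also have "\<dots> = 0" using ne[OF WtS] by (simp add: D_def X2_def)
    finally show ?thesis .
  qed
  have NB2: "(\<lambda>i j. N i j - B2 i j) = mmult k1 XN (\<lambda>i j. YN i j - mmult k2 Z Y i j)"
    by (simp add: N_def B2eq mm_diff)
  have NB2R: "(\<lambda>i j. YN i j - mmult k2 Z Y i j) \<in> fac Rq" by (rule fac_diff[OF YN ZY])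
  define R where "R = (\<lambda>i j. (M i j - N i j) + (B2 i j - B i j))"
  have split: "(\<lambda>i j. M i j - B i j) = (\<lambda>i j. (N i j - B2 i j) + R i j)"
    by (simp add: R_def)
  have c1: "Re (ip m n (\<lambda>i j. N i j - B2 i j) (\<lambda>i j. M i j - N i j)) = 0"
  proof -
    have "Re (ip m n (\<lambda>i j. N i j - B2 i j) (\<lambda>i j. M i j - N i j))
        = Re (cnj (ip m n (\<lambda>i j. M i j - N i j) (\<lambda>i j. N i j - B2 i j)))"
      by (simp only: ip_cnj)
    also have "\<dots> = 0" unfolding NB2 using orth1[OF NB2R] by simp
    finally show ?thesis .
  qed
  have c2: "ip m n (\<lambda>i j. N i j - B2 i j) (\<lambda>i j. B2 i j - B i j) = 0"
  proof -
    have "ip m n (\<lambda>i j. B i j - B2 i j) (\<lambda>i j. N i j - B2 i j) = 0"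
      unfolding NB2 by (rule orth2[OF NB2R])
    then have "ip m n (\<lambda>i j. B2 i j - B i j) (\<lambda>i j. N i j - B2 i j) = 0"
      by (simp add: ip_diff_left)
    then have "cnj (ip m n (\<lambda>i j. N i j - B2 i j) (\<lambda>i j. B2 i j - B i j)) = 0"
      by (simp only: ip_cnj)
    then show ?thesis by simp
  qed
  have "Re (ip m n (\<lambda>i j. N i j - B2 i j) R) = 0"
    unfolding R_def ip_add_right using c1 c2 by simp
  then have "nsq m n (\<lambda>i j. M i j - B i j) = nsq m n (\<lambda>i j. N i j - B2 i j) + nsq m n R"
    unfolding split nsq_add by simp
  then have "nsq m n (\<lambda>i j. N i j - B2 i j) \<le> nsq m n (\<lambda>i j. M i j - B i j)"
    using nsq_nonneg[of m n R] by simp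
  then show ?thesis using X2 by (auto simp: N_def B2_def B_def)
qed


definition tr :: "cmat \<Rightarrow> cmat" where "tr A = (\<lambda>i j. A j i)"

lemma tr_mm: "tr (mmult k A B) = mmult k (tr B) (tr A)"
  by (simp add: tr_def mmult_def mult.commute)
lemma tr_tr[simp]: "tr (tr A) = A" by (simp add: tr_def)
lemma nsq_tr: "nsq m n A = nsq n m (tr A)"
  unfolding nsq_def tr_def by (rule sum.swap)
lemma fac_tr: "A \<in> fac R \<Longrightarrow> tr A \<in> fac (\<lambda>i j. R j i)"
  by (simp add: fac_def tr_def)
lemma fac_tr': "A \<in> fac (\<lambda>i j. R j i) \<Longrightarrow> tr A \<in> fac R"
  by (simp add: fac_def tr_def)

lemma core_right:
  fixes XN YN X Y M :: cmat
  assumes H1: "\<And>i q p. Ls i q \<Longrightarrow> Mid q p \<Longrightarrow> Lq i p"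
    and H2: "\<And>q p j. Mid q p \<Longrightarrow> Rq p j \<Longrightarrow> Rs q j"
    and H3: "\<And>i q p j. Ls i q \<Longrightarrow> Lq i p \<Longrightarrow> Rs q j \<Longrightarrow> Rq p j \<Longrightarrow> Mid q p"
    and XN: "XN \<in> fac Lq" and YN: "YN \<in> fac Rq" and X: "X \<in> fac Ls" and Y: "Y \<in> fac Rs"
    and min: "\<And>W. W \<in> fac Lq \<Longrightarrow> nsq m n (\<lambda>i j. M i j - mmult k1 XN YN i j)
                 \<le> nsq m n (\<lambda>i j. M i j - mmult k1 W YN i j)"
  shows "\<exists>Y2\<in>fac Rs. nsq m n (\<lambda>i j. mmult k1 XN YN i j - mmult k2 X Y2 i j)
            \<le> nsq m n (\<lambda>i j. M i j - mmult k2 X Y i j)"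
proof -
  have min': "nsq n m (\<lambda>i j. tr M i j - mmult k1 (tr YN) (tr XN) i j)
        \<le> nsq n m (\<lambda>i j. tr M i j - mmult k1 (tr YN) W i j)" if W: "W \<in> fac (\<lambda>i j. Lq j i)" for W
  proof -
    have "tr W \<in> fac Lq" by (rule fac_tr'[OF W])
    from min[OF this] show ?thesis
      by (simp add: nsq_tr[of m n] tr_def mmult_def mult.commute)
  qed
  have "\<exists>X2\<in>fac (\<lambda>i j. Rs j i). nsq n m (\<lambda>i j. mmult k1 (tr YN) (tr XN) i j - mmult k2 X2 (tr X) i j)
      \<le> nsq n m (\<lambda>i j. tr M i j - mmult k2 (tr Y) (tr X) i j)"
    apply (rule core_left[where Lq="\<lambda>i j. Rq j i" and Rq="\<lambda>i j. Lq j i" and Ls="\<lambda>i j. Rs j i"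
        and Rs="\<lambda>i j. Ls j i" and Mid="\<lambda>i j. Mid j i"])
    using H1 H2 H3 fac_tr[OF YN] fac_tr[OF XN] fac_tr[OF Y] fac_tr[OF X] min' by blast+
  then obtain X2 where X2: "X2 \<in> fac (\<lambda>i j. Rs j i)" and le:
    "nsq n m (\<lambda>i j. mmult k1 (tr YN) (tr XN) i j - mmult k2 X2 (tr X) i j)
      \<le> nsq n m (\<lambda>i j. tr M i j - mmult k2 (tr Y) (tr X) i j)" by blast
  show ?thesis
  proof (intro bexI[of _ "tr X2"])
    show "tr X2 \<in> fac Rs" by (rule fac_tr'[OF X2])
    show "nsq m n (\<lambda>i j. mmult k1 XN YN i j - mmult k2 X (tr X2) i j)
        \<le> nsq m n (\<lambda>i j. M i j - mmult k2 X Y i j)"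
      using le by (simp add: nsq_tr[of m n] tr_def mmult_def mult.commute)
  qed
qed




definition Rel :: "nat \<Rightarrow> nat \<Rightarrow> nat \<Rightarrow> nat \<Rightarrow> nat \<Rightarrow> nat \<Rightarrow> bool" where
  "Rel a d N1 N2 i j = (i < N1 \<and> j < N2 \<and> i div (N1 div a) = j div (N2 div a) \<and> i mod d = j mod d)"

lemma coarsen:
  assumes "0 < (a::nat)" "a dvd a'" "a' dvd N" and a'0: "0 < a'"
  shows "x div (N div a) = x div (N div a') div (a' div a)"
proof -
  obtain r where r: "a' = a * r" using assms(2) by blast
  obtain t where t: "N = a' * t" using assms(3) by blast
  have "N div a = t * r" using assms(1) unfolding t r by (simp add: mult.assoc mult.commute[of r t])
  moreover have "N div a' = t"
    using a'0 t by simp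
  moreover have "a' div a = r" using assms(1) by (simp add: r)
  ultimately show ?thesis by (simp add: div_mult2_eq)
qed

lemma mod_coarsen: "(d'::nat) dvd d \<Longrightarrow> x mod d = y mod d \<Longrightarrow> x mod d' = y mod d'"
  using mod_mod_cancel[of d' d x] mod_mod_cancel[of d' d y] by simp

lemma rel_comp:
  assumes h: "0 < a" "a dvd a'" "a' dvd N2" "a' dvd N3" and dd: "d' dvd d" and a'0: "0 < a'"
    and r1: "Rel a d N1 N2 x y" and r2: "Rel a' d' N2 N3 y z"
  shows "Rel a d' N1 N3 x z"
proof -
  have "x div (N1 div a) = y div (N2 div a)" using r1 by (simp add: Rel_def)
  also have "\<dots> = y div (N2 div a') div (a' div a)" by (rule coarsen[OF h(1-3) a'0])
  also have "\<dots> = z div (N3 div a') div (a' div a)" using r2 by (simp add: Rel_def)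
  also have "\<dots> = z div (N3 div a)" by (rule coarsen[OF h(1,2,4) a'0, symmetric])
  finally have 1: "x div (N1 div a) = z div (N3 div a)" .
  have "x mod d = y mod d" "y mod d' = z mod d'" "x < N1" "z < N3" using r1 r2 by (simp_all add: Rel_def)
  then have "x mod d' = z mod d'" "x < N1" "z < N3" using mod_coarsen[OF dd] by metis+
  then show ?thesis using 1 unfolding Rel_def by blast
qed

lemma rel_h3:
  assumes "0 < A1" "A1 dvd A2" "A2 dvd Ns" "A2 dvd NL" "(D2::nat) dvd D1"
    "Rel a0 D1 N0 Nq i p" "Rel a0 D2 N0 Ns i m" "Rel A2 dL Ns NL m j" "Rel A1 dL Nq NL p j"
    and A20: "0 < A2"
  shows "Rel A1 D2 Nq Ns p m"
proof -
  have "p div (Nq div A1) = j div (NL div A1)" using assms(9) by (simp add: Rel_def)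
  also have "\<dots> = j div (NL div A2) div (A2 div A1)" by (rule coarsen[OF assms(1,2,4) A20])
  also have "\<dots> = m div (Ns div A2) div (A2 div A1)" using assms(8) by (simp add: Rel_def)
  also have "\<dots> = m div (Ns div A1)" by (rule coarsen[OF assms(1-3) A20, symmetric])
  finally have 1: "p div (Nq div A1) = m div (Ns div A1)" .
  have "i mod D1 = p mod D1" using assms(6) by (simp add: Rel_def)
  then have "p mod D2 = i mod D2" using mod_coarsen[OF assms(5)] by metis
  also have "\<dots> = m mod D2" using assms(7) by (simp add: Rel_def)
  finally have 2: "p mod D2 = m mod D2" .
  have "p < Nq" "m < Ns" using assms(6,7) by (simp_all add: Rel_def)
  then show ?thesis using 1 2 unfolding Rel_def by blast
qed

lemma supp_S_Rel:
  assumes "0 < fst p"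
  shows "supp_S p = Rel (fst p) (snd (snd (snd p))) (fst p * fst (snd p) * snd (snd (snd p)))
                        (fst p * fst (snd (snd p)) * snd (snd (snd p)))"
proof -
  obtain a b c d where p: "p = (a,b,c,d)" by (cases p)
  have a: "0 < a" using assms p by simp
  have 1: "a * b * d div a = b * d" using a by (simp add: mult.assoc)
  have 2: "a * c * d div a = c * d" using a by (simp add: mult.assoc)
  show ?thesis unfolding p by (simp add: supp_S_def Rel_def fun_eq_iff 1 2)
qed


definition gA :: "pattern list \<Rightarrow> nat \<Rightarrow> nat" where "gA ps l = fst (ps ! l)"
definition gB :: "pattern list \<Rightarrow> nat \<Rightarrow> nat" where "gB ps l = fst (snd (ps ! l))"
definition gC :: "pattern list \<Rightarrow> nat \<Rightarrow> nat" where "gC ps l = fst (snd (snd (ps ! l)))"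
definition gD :: "pattern list \<Rightarrow> nat \<Rightarrow> nat" where "gD ps l = snd (snd (snd (ps ! l)))"
definition nr :: "pattern list \<Rightarrow> nat \<Rightarrow> nat" where "nr ps l = gA ps l * gB ps l * gD ps l"
definition nc :: "pattern list \<Rightarrow> nat \<Rightarrow> nat" where "nc ps l = gA ps l * gC ps l * gD ps l"

lemma pat_eq: "ps ! l = (gA ps l, gB ps l, gC ps l, gD ps l)"
  by (simp add: gA_def gB_def gC_def gD_def)

lemma arch_pos:
  assumes "chainable_arch ps" "l < length ps"
  shows "0 < gA ps l" "0 < gB ps l" "0 < gC ps l" "0 < gD ps l"
proof -
  have "pattern_pos (ps ! l)" using assms by (auto simp: chainable_arch_def architecture_def)
  then show "0 < gA ps l" "0 < gB ps l" "0 < gC ps l" "0 < gD ps l"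
    by (subst (asm) pat_eq, simp add: pattern_pos_def)+
qed

lemma arch_link:
  assumes "chainable_arch ps" "Suc l < length ps"
  shows "nc ps l = nr ps (Suc l)"
proof -
  have "pcols (ps ! l) = prows (ps ! Suc l)" using assms by (auto simp: chainable_arch_def architecture_def)
  then show ?thesis by (subst (asm) pat_eq, subst (asm) pat_eq) (simp add: pcols_def prows_def nc_def nr_def)
qed

lemma arch_ch:
  assumes "chainable_arch ps" "Suc l < length ps"
  shows "gA ps l dvd gA ps (Suc l)" "gD ps (Suc l) dvd gD ps l"
proof -
  have "chainable (ps ! l) (ps ! Suc l)" using assms by (auto simp: chainable_arch_def)
  then show "gA ps l dvd gA ps (Suc l)" "gD ps (Suc l) dvd gD ps l"
    by (subst (asm) pat_eq, subst (asm) pat_eq, simp add: chainable_def)+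
qed

lemma arch_mono:
  assumes "chainable_arch ps" "u \<le> v" "v < length ps"
  shows "gA ps u dvd gA ps v \<and> gD ps v dvd gD ps u"
  using assms(2,3)
proof (induction v)
  case 0 then show ?case by simp
next
  case (Suc v)
  show ?case
  proof (cases "u = Suc v")
    case True then show ?thesis by simp
  next
    case False
    then have "u \<le> v" "v < length ps" using Suc.prems by auto
    with Suc.IH have "gA ps u dvd gA ps v \<and> gD ps v dvd gD ps u" by simp
    moreover have "gA ps v dvd gA ps (Suc v)" "gD ps (Suc v) dvd gD ps v"
      using arch_ch[OF assms(1)] Suc.prems by auto
    ultimately show ?thesis using dvd_trans by blast
  qed
qed

lemma iter_snoc: "ys \<noteq> [] \<Longrightarrow> iter_star (ys @ [y]) = pstar (iter_star ys) y"
  by (cases ys) (auto simp: iter_star_def)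

lemma iter_take:
  assumes "chainable_arch ps" "u + k < length ps"
  shows "iter_star (take (Suc k) (drop u ps)) =
    (gA ps u, gB ps u * gD ps u div gD ps (u+k), gA ps (u+k) * gC ps (u+k) div gA ps u, gD ps (u+k))"
  using assms(2)
proof (induction k)
  case 0
  have "take (Suc 0) (drop u ps) = [ps ! u]" using 0 by (simp add: take_Suc_conv_app_nth)
  then show ?case using arch_pos[OF assms(1), of u] 0 by (simp add: iter_star_def pat_eq[of ps u])
next
  case (Suc k)
  have eq: "take (Suc (Suc k)) (drop u ps) = take (Suc k) (drop u ps) @ [ps ! (u + Suc k)]"
    using Suc.prems by (simp add: take_Suc_conv_app_nth)
  have ne: "take (Suc k) (drop u ps) \<noteq> []" using Suc.prems by simp
  have d1: "gD ps (u+k) dvd gD ps u" using arch_mono[OF assms(1), of u "u+k"] Suc.prems by simp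
  have "gD ps (u + k) dvd gB ps u * gD ps u" using d1 by simp
  then have m: "gB ps u * gD ps u div gD ps (u+k) * gD ps (u+k) = gB ps u * gD ps u"
    by simp
  show ?case
    unfolding eq iter_snoc[OF ne] Suc.IH[OF Suc_lessD[OF Suc.prems[unfolded add_Suc_right]]]
    by (subst pat_eq) (simp add: pstar_def m)
qed


definition PP :: "pattern list \<Rightarrow> nat \<Rightarrow> nat \<Rightarrow> pattern" where
  "PP ps u v = (gA ps u, gB ps u * gD ps u div gD ps v, gA ps v * gC ps v div gA ps u, gD ps v)"

lemma split_left_eq:
  assumes "chainable_arch ps" "1 \<le> s" "s \<le> length ps"
  shows "split_left ps s = PP ps 0 (s - 1)"
proof -
  have "take s ps = take (Suc (s-1)) (drop 0 ps)" using assms by simp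
  then show ?thesis using iter_take[OF assms(1), of 0 "s-1"] assms by (simp add: split_left_def PP_def)
qed

lemma split_right_eq:
  assumes "chainable_arch ps" "s < length ps"
  shows "split_right ps s = PP ps s (length ps - 1)"
proof -
  have "drop s ps = take (Suc (length ps - 1 - s)) (drop s ps)" using assms by simp
  then show ?thesis using iter_take[OF assms(1), of s "length ps - 1 - s"] assms
    by (simp add: split_right_def PP_def)
qed

lemma PP_facts:
  assumes "chainable_arch ps" "u \<le> v" "v < length ps"
  shows "supp_S (PP ps u v) = Rel (gA ps u) (gD ps v) (nr ps u) (nc ps v)"
    "pcols (PP ps u v) = nc ps v" "prows (PP ps u v) = nr ps u"
proof -
  have mo: "gA ps u dvd gA ps v" "gD ps v dvd gD ps u" using arch_mono[OF assms] by auto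
  have pu: "0 < gA ps u" using arch_pos[OF assms(1)] assms by simp
  have 1: "gA ps u * (gB ps u * gD ps u div gD ps v) * gD ps v = nr ps u"
    using mo by (simp add: nr_def mult.assoc)
  have 2: "gA ps u * (gA ps v * gC ps v div gA ps u) * gD ps v = nc ps v"
    using mo by (simp add: nc_def mult.assoc)
  show "supp_S (PP ps u v) = Rel (gA ps u) (gD ps v) (nr ps u) (nc ps v)"
    using supp_S_Rel[of "PP ps u v"] pu 1 2 by (simp add: PP_def)
  show "pcols (PP ps u v) = nc ps v" using 2 by (simp add: PP_def pcols_def)
  show "prows (PP ps u v) = nr ps u" using 1 by (simp add: PP_def prows_def)
qed

lemma factors_fac: "factors p = fac (supp_S p)"
  by (simp add: factors_def fac_def)

lemma Bset_eq:
  assumes "chainable_arch ps" "1 \<le> s" "s < length ps"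
  shows "Bset ps s = {mmult (nr ps s) X Y | X Y.
      X \<in> fac (Rel (gA ps 0) (gD ps (s-1)) (nr ps 0) (nr ps s)) \<and>
      Y \<in> fac (Rel (gA ps s) (gD ps (length ps - 1)) (nr ps s) (nc ps (length ps - 1)))}"
proof -
  have l: "nc ps (s-1) = nr ps s" using arch_link[OF assms(1), of "s-1"] assms by simp
  show ?thesis
    unfolding Bset_def split_left_eq[OF assms(1,2) less_imp_le[OF assms(3)]]
      split_right_eq[OF assms(1,3)] factors_fac
    using PP_facts[OF assms(1), of 0 "s-1"] PP_facts[OF assms(1), of s "length ps - 1"] assms l
    by simp
qed

lemma arows_eq: "chainable_arch ps \<Longrightarrow> arows ps = nr ps 0"
  by (cases ps) (auto simp: arows_def chainable_arch_def architecture_def prows_def nr_def gA_def gB_def gD_def split: prod.splits)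

lemma acols_eq: "chainable_arch ps \<Longrightarrow> acols ps = nc ps (length ps - 1)"
  by (auto simp: acols_def chainable_arch_def architecture_def pcols_def nc_def gA_def gC_def gD_def last_conv_nth split: prod.splits)


lemma A_dvd_nr: "chainable_arch ps \<Longrightarrow> u \<le> w \<Longrightarrow> w < length ps \<Longrightarrow> gA ps u dvd nr ps w"
  using arch_mono[of ps u w] by (auto simp: nr_def)
lemma A_dvd_nc: "chainable_arch ps \<Longrightarrow> u \<le> w \<Longrightarrow> w < length ps \<Longrightarrow> gA ps u dvd nc ps w"
  using arch_mono[of ps u w] by (auto simp: nc_def)

lemma frob_nonneg: "0 \<le> frob m n A" by (simp add: frob_def sum_nonneg)

theorem lemma7p11:
  fixes beta :: "pattern list" and M N :: cmat and s q :: nat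
  assumes "chainable_arch beta"
    and "1 \<le> s" and "s < length beta"
    and "1 \<le> q" and "q < length beta"
    and "N \<in> Bset beta q"
    and "frob (arows beta) (acols beta) (\<lambda>i j. M i j - N i j) = Err beta q M"
  shows "Err beta s M \<ge> Err beta s N"
proof -
  note ch = assms(1)
  define L where "L = length beta"
  define m where "m = nr beta 0"
  define n where "n = nc beta (L - 1)"
  define LL where "LL = (\<lambda>s. Rel (gA beta 0) (gD beta (s-1)) (nr beta 0) (nr beta s))"
  define RR where "RR = (\<lambda>s. Rel (gA beta s) (gD beta (L-1)) (nr beta s) (nc beta (L-1)))"
  have BS: "Bset beta t = {mmult (nr beta t) X Y | X Y. X \<in> fac (LL t) \<and> Y \<in> fac (RR t)}"
    if "1 \<le> t" "t < L" for t
    using Bset_eq[OF ch that[unfolded L_def]] by (simp add: LL_def RR_def L_def)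
  have ar: "arows beta = m" "acols beta = n"
    using arows_eq[OF ch] acols_eq[OF ch] by (simp_all add: m_def n_def L_def)
  have ErrE: "Err beta t A = Inf ((\<lambda>B. frob m n (\<lambda>i j. A i j - B i j)) ` Bset beta t)" for t A
    by (simp add: Err_def ar)
  have bdd: "bdd_below ((\<lambda>B. frob m n (\<lambda>i j. A i j - B i j)) ` Bset beta t)" for t A
    by (rule bdd_belowI[of _ 0]) (auto simp: frob_nonneg)
  have zero_in: "(\<lambda>i j. 0) \<in> Bset beta t" if "1 \<le> t" "t < L" for t
  proof -
    have "(\<lambda>i j. 0::complex) \<in> fac (LL t)" "(\<lambda>i j. 0::complex) \<in> fac (RR t)" by (auto simp: fac_def)
    moreover have "mmult (nr beta t) (\<lambda>i j. 0) (\<lambda>i j. 0) = (\<lambda>i j. 0)" by (simp add: mmult_def)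
    ultimately show ?thesis unfolding BS[OF that] by force
  qed
  have sL: "1 \<le> s" "s < L" and qL: "1 \<le> q" "q < L" using assms(2-5) by (auto simp: L_def)
  obtain XN YN where XN: "XN \<in> fac (LL q)" and YN: "YN \<in> fac (RR q)"
    and Neq: "N = mmult (nr beta q) XN YN"
    using assms(6) unfolding BS[OF qL] by blast
  have minq: "nsq m n (\<lambda>i j. M i j - N i j) \<le> nsq m n (\<lambda>i j. M i j - mmult (nr beta q) X' Y' i j)"
    if "X' \<in> fac (LL q)" "Y' \<in> fac (RR q)" for X' Y'
  proof -
    have "mmult (nr beta q) X' Y' \<in> Bset beta q" unfolding BS[OF qL] using that by blast
    then have "Err beta q M \<le> frob m n (\<lambda>i j. M i j - mmult (nr beta q) X' Y' i j)"
      unfolding ErrE by (intro cInf_lower bdd) auto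
    then have "frob m n (\<lambda>i j. M i j - N i j) \<le> frob m n (\<lambda>i j. M i j - mmult (nr beta q) X' Y' i j)"
      using assms(7) ar by simp
    then show ?thesis by (simp add: frob_nsq)
  qed
  have pos: "0 < gA beta u" if "u < L" for u using arch_pos[OF ch] that by (simp add: L_def)
  have monoA: "gA beta u dvd gA beta v" "gD beta v dvd gD beta u" if "u \<le> v" "v < L" for u v
    using arch_mono[OF ch that(1)] that(2) by (auto simp: L_def)
  have dnr: "gA beta u dvd nr beta w" if "u \<le> w" "w < L" for u w
    using A_dvd_nr[OF ch that(1)] that(2) by (simp add: L_def)
  have dnc: "gA beta u dvd nc beta (L-1)" if "u < L" for u
    using A_dvd_nc[OF ch, of u "L-1"] that by (simp add: L_def n_def)
  have key: "\<exists>B2\<in>Bset beta s. frob m n (\<lambda>i j. N i j - B2 i j) \<le> frob m n (\<lambda>i j. M i j - B i j)"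
    if B: "B \<in> Bset beta s" for B
  proof -
    obtain X Y where X: "X \<in> fac (LL s)" and Y: "Y \<in> fac (RR s)" and Beq: "B = mmult (nr beta s) X Y"
      using B unfolding BS[OF sL] by blast
    consider "q = s" | "q < s" | "s < q" by linarith
    then show ?thesis
    proof cases
      case 1
      have "frob m n (\<lambda>i j. N i j - N i j) = 0" by (simp add: frob_def)
      then show ?thesis using assms(6) 1 frob_nonneg by (intro bexI[of _ N]) auto
    next
      case 2
      define Mid where "Mid = Rel (gA beta q) (gD beta (s-1)) (nr beta q) (nr beta s)"
      have H1: "LL s i p'" if "LL q i p" "Mid p p'" for i p p'
        using rel_comp[OF pos[of 0] monoA(1)[of 0 q] dnr[of q q] dnr[of q s] monoA(2)[of "q-1" "s-1"]
            pos[of q] that[unfolded LL_def Mid_def]] 2 sL qL by (simp add: LL_def)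
      have H2: "RR q p j" if "Mid p p'" "RR s p' j" for p p' j
        using rel_comp[OF pos[of q] monoA(1)[of q s] dnr[of s s] dnc[of s] monoA(2)[of "s-1" "L-1"]
            pos[of s] that[unfolded RR_def Mid_def]] 2 sL qL by (simp add: RR_def n_def)
      have H3: "Mid p p'" if "LL q i p" "LL s i p'" "RR s p' j" "RR q p j" for i p p' j
        using rel_h3[OF pos[of q] monoA(1)[of q s] dnr[of s s] dnc[of s] monoA(2)[of "q-1" "s-1"]
            that[unfolded LL_def RR_def] pos[of s]] 2 sL qL by (simp add: Mid_def n_def)
      obtain X2 where X2: "X2 \<in> fac (LL s)" and le:
        "nsq m n (\<lambda>i j. mmult (nr beta q) XN YN i j - mmult (nr beta s) X2 Y i j)
           \<le> nsq m n (\<lambda>i j. M i j - mmult (nr beta s) X Y i j)"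
      proof -
        have mn: "nsq m n (\<lambda>i j. M i j - mmult (nr beta q) XN YN i j)
                 \<le> nsq m n (\<lambda>i j. M i j - mmult (nr beta q) XN W i j)" if "W \<in> fac (RR q)" for W
          using minq[OF XN that] Neq by simp
        have "\<exists>X2\<in>fac (LL s). nsq m n (\<lambda>i j. mmult (nr beta q) XN YN i j - mmult (nr beta s) X2 Y i j)
           \<le> nsq m n (\<lambda>i j. M i j - mmult (nr beta s) X Y i j)"
          apply (rule core_left[where Lq="LL q" and Mid=Mid and Ls="LL s" and Rs="RR s" and Rq="RR q"])
          using H1 H2 H3 XN YN X Y mn by blast+
        then show ?thesis using that by blast
      qed
      have "mmult (nr beta s) X2 Y \<in> Bset beta s" unfolding BS[OF sL] using X2 Y by blast
      then show ?thesis using le Neq Beq by (intro bexI[of _ "mmult (nr beta s) X2 Y"]) (auto simp: frob_nsq)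
    next
      case 3
      define Mid where "Mid = Rel (gA beta s) (gD beta (q-1)) (nr beta s) (nr beta q)"
      have H1: "LL q i p" if "LL s i p'" "Mid p' p" for i p p'
        using rel_comp[OF pos[of 0] monoA(1)[of 0 s] dnr[of s s] dnr[of s q] monoA(2)[of "s-1" "q-1"]
            pos[of s] that[unfolded LL_def Mid_def]] 3 sL qL by (simp add: LL_def)
      have H2: "RR s p' j" if "Mid p' p" "RR q p j" for p p' j
        using rel_comp[OF pos[of s] monoA(1)[of s q] dnr[of q q] dnc[of q] monoA(2)[of "q-1" "L-1"]
            pos[of q] that[unfolded RR_def Mid_def]] 3 sL qL by (simp add: RR_def n_def)
      have H3: "Mid p' p" if "LL s i p'" "LL q i p" "RR s p' j" "RR q p j" for i p p' j
        using rel_h3[OF pos[of s] monoA(1)[of s q] dnr[of q q] dnc[of q] monoA(2)[of "s-1" "q-1"]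
            that(1,2)[unfolded LL_def] that(4,3)[unfolded RR_def] pos[of q]] 3 sL qL by (simp add: Mid_def n_def)
      obtain Y2 where Y2: "Y2 \<in> fac (RR s)" and le:
        "nsq m n (\<lambda>i j. mmult (nr beta q) XN YN i j - mmult (nr beta s) X Y2 i j)
           \<le> nsq m n (\<lambda>i j. M i j - mmult (nr beta s) X Y i j)"
      proof -
        have mn: "nsq m n (\<lambda>i j. M i j - mmult (nr beta q) XN YN i j)
                 \<le> nsq m n (\<lambda>i j. M i j - mmult (nr beta q) W YN i j)" if "W \<in> fac (LL q)" for W
          using minq[OF that YN] Neq by simp
        have "\<exists>Y2\<in>fac (RR s). nsq m n (\<lambda>i j. mmult (nr beta q) XN YN i j - mmult (nr beta s) X Y2 i j)
           \<le> nsq m n (\<lambda>i j. M i j - mmult (nr beta s) X Y i j)"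
          apply (rule core_right[where Lq="LL q" and Mid=Mid and Ls="LL s" and Rs="RR s" and Rq="RR q"])
          using H1 H2 H3 XN YN X Y mn by blast+
        then show ?thesis using that by blast
      qed
      have "mmult (nr beta s) X Y2 \<in> Bset beta s" unfolding BS[OF sL] using X Y2 by blast
      then show ?thesis using le Neq Beq by (intro bexI[of _ "mmult (nr beta s) X Y2"]) (auto simp: frob_nsq)
    qed
  qed
  show ?thesis
    unfolding ErrE
  proof (rule cInf_greatest)
    show "(\<lambda>B. frob m n (\<lambda>i j. M i j - B i j)) ` Bset beta s \<noteq> {}" using zero_in[OF sL] by blast
  next
    fix x assume "x \<in> (\<lambda>B. frob m n (\<lambda>i j. M i j - B i j)) ` Bset beta s"
    then obtain B where B: "B \<in> Bset beta s" and x: "x = frob m n (\<lambda>i j. M i j - B i j)" by blast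
    obtain B2 where B2: "B2 \<in> Bset beta s" and le: "frob m n (\<lambda>i j. N i j - B2 i j) \<le> x"
      using key[OF B] x by blast
    have "Inf ((\<lambda>B. frob m n (\<lambda>i j. N i j - B i j)) ` Bset beta s) \<le> frob m n (\<lambda>i j. N i j - B2 i j)"
      by (intro cInf_lower bdd) (use B2 in auto)
    then show "Inf ((\<lambda>B. frob m n (\<lambda>i j. N i j - B i j)) ` Bset beta s) \<le> x" using le by simp
  qed
qed

end
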